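(* Let $\mathcal{N}\subset\mathbb{R}^d$ be compact, $T>0$, $x^0,x^1\in\mathbb{R}^N$, and let $\nu\mapsto(\mathbf{A}(\nu),\mathbf{B}(\nu))\in\mathbb{R}^{N\times N}\times\mathbb{R}^{N\times M}$ be Lipschitz continuous on $\mathcal{N}$. Assume the uniform controllability condition: there are constants $0<\Lambda_-\le\Lambda_+$ with $\Lambda_- I\le \Lambda_\nu\le\Lambda_+ I$ (as quadratic forms) for all $\nu\in\mathcal{N}$, where $\Lambda_\nu$ is the Gramian defined in the context. For $\nu\in\mathcal N$ let $\varphi^0_\nu\in\mathbb{R}^N$ be the unique solution of $\Lambda_\nu\varphi^0_\nu=x^1-e^{T\mathbf{A}_\nu}x^0$, and let $C_\varphi$ be the Lipschitz constant of the map $\nu\mapsto\varphi^0_\nu$. Given $\varepsilon>0$, run the offline greedy control algorithm (described in the context) with a discretisation constant $\delta$ satisfying $\delta\le \varepsilon/(2C_\varphi\Lambda_-)$, and suppose it selects $n\ge1$ parameter values $\nu_1,\dots,\nu_n$ with corresponding vectors $\varphi^0_j:=\varphi^0_{\nu_j}$; write $\Phi^0_j=\mathrm{span}\{\varphi^0_1,\dots,\varphi^0_j\}$. Then, with $\gamma=\Lambda_-/(2\Lambda_+)\le 1/2$, $$|\varphi^0_1|\ge\gamma\max_{\nu\in\mathcal N}|\varphi^0_\nu|,\qquad \mathrm{dist}(\varphi^0_{j+1},\Phi^0_j)\ge\gamma\max_{\nu\in\mathcal N}\mathrm{dist}(\varphi^0_\nu,\Phi^0_j)\ \ (j=1,\dots,n-1),$$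 i.e. the algorithm is a weak greedy algorithm with constant $\gamma$ for the compact set $\{\varphi^0_\nu:\nu\in\mathcal N\}$, and the final approximation error satisfies $$\max_{\nu\in\mathcal N}\mathrm{dist}(\varphi^0_\nu,\Phi^0_n)<\varepsilon/\Lambda_- .$$
   Context: Control system (for each parameter $\nu\in\mathcal N$): $x'(t)=\mathbf{A}_\nu x(t)+\mathbf{B}_\nu u(t)$, $0<t<T$, $x(0)=x^0$, with $\mathbf{A}_\nu=\mathbf{A}(\nu)$, $\mathbf{B}_\nu=\mathbf{B}(\nu)$. Its (controllability) Gramian is $\Lambda_\nu=\int_0^T e^{(T-t)\mathbf{A}_\nu}\mathbf{B}_\nu\mathbf{B}_\nu^{*}e^{(T-t)\mathbf{A}_\nu^{*}}\,dt$. The vector $\varphi^0_\nu=\Lambda_\nu^{-1}(x^1-e^{T\mathbf A_\nu}x^0)$ is the minimiser of $J_\nu(\varphi^0)=\frac12\int_0^T|\mathbf B_\nu^*\varphi(t)|^2dt-\langle x^1,\varphi^0\rangle+\langle x^0,\varphi(0)\rangle$, where $\varphi(t)=e^{(T-t)\mathbf A_\nu^*}\varphi^0$, and $u_\nu=\mathbf B_\nu^*e^{(T-t)\mathbf A_\nu^*}\varphi^0_\nu$ is the minimal $L^2$-norm control steering $x^0$ to $x^1$. For a subspace $\Phi\subset\mathbb R^N$, $\Lambda_\nu\Phi=\{\Lambda_\nu\psi:\psi\in\Phi\}$; $\mathrm{dist}$ is Euclidean distance. Offline greedy control algorithm with tolerance $\varepsilon>0$ and discretisation constant $\delta>0$: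 Step 1: choose a finite set $\tilde{\mathcal N}\subset\mathcal N$ with $\mathrm{dist}(\nu,\tilde{\mathcal N})<\delta$ for all $\nu\in\mathcal N$. Step 2: if $\max_{\tilde\nu\in\tilde{\mathcal N}}|x^1-e^{T\mathbf A_{\tilde\nu}}x^0|<\varepsilon/2$ stop (with $n=0$); otherwise let $\nu_1$ be a maximiser of $\tilde\nu\mapsto|x^1-e^{T\mathbf A_{\tilde\nu}}x^0|$ over $\tilde{\mathcal N}$ and set $\varphi^0_1=\varphi^0_{\nu_1}$. Step 3: having $\nu_1,\dots,\nu_j$, if $\max_{\tilde\nu\in\tilde{\mathcal N}}\mathrm{dist}(x^1-e^{T\mathbf A_{\tilde\nu}}x^0,\Lambda_{\tilde\nu}\Phi^0_j)<\varepsilon/2$ stop (with $n=j$); otherwise let $\nu_{j+1}$ be a maximiser over $\tilde{\mathcal N}$ of $\tilde\nu\mapsto \mathrm{dist}(x^1-e^{T\mathbf A_{\tilde\nu}}x^0,\Lambda_{\tilde\nu}\Phi^0_j)$, set $\varphi^0_{j+1}=\varphi^0_{\nu_{j+1}}$ and repeat Step 3. *)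

theory Defs
  imports "HOL-Analysis.Analysis"
begin

definition matpow :: "real^'n^'n \<Rightarrow> nat \<Rightarrow> real^'n^'n" where
  "matpow A k = (((**) A) ^^ k) (mat 1)"

definition mexp :: "real^'n^'n \<Rightarrow> real^'n^'n" where
  "mexp A = (\<Sum>k. (1 / fact k) *\<^sub>R matpow A k)"

definition gramian :: "real^'n^'n \<Rightarrow> real^'m^'n \<Rightarrow> real \<Rightarrow> real^'n^'n" where
  "gramian A B T = integral {0..T}
     (\<lambda>t. mexp ((T - t) *\<^sub>R A) ** B ** transpose B ** mexp ((T - t) *\<^sub>R transpose A))"

definition phi0 :: "('d \<Rightarrow> real^'n^'n) \<Rightarrow> ('d \<Rightarrow> real^'m^'n) \<Rightarrow> real
                    \<Rightarrow> real^'n \<Rightarrow> real^'n \<Rightarrow> 'd \<Rightarrow> real^'n" where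
  "phi0 A B T x0 x1 \<nu> = matrix_inv (gramian (A \<nu>) (B \<nu>) T) *v (x1 - mexp (T *\<^sub>R A \<nu>) *v x0)"

end

theory Submission imports Defs begin

lemma matrix_add_rdistrib': "((B + C) ** A) = (B ** A) + (C ** A)"
  for A B C :: "real^'n^'n"
  by (vector matrix_matrix_mult_def sum.distrib[symmetric] field_simps)

lemma bilinear_matmul: "bilinear ((**) :: real^'n^'n \<Rightarrow> real^'n^'n \<Rightarrow> real^'n^'n)"
  unfolding bilinear_def linear_iff
  by (auto simp: matrix_add_ldistrib matrix_add_rdistrib' scalar_matrix_assoc matrix_scalar_ac)

lemma matmul_bound: "\<exists>K>0. \<forall>(a::real^'n^'n) (b::real^'n^'n). norm (a ** b) \<le> norm a * norm b * K"
  using bounded_bilinear.pos_bounded[OF bilinear_matmul[unfolded bilinear_conv_bounded_bilinear]]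
  by blast

lemma matpow_Suc: "matpow A (Suc k) = A ** matpow A k"
  by (simp add: matpow_def)

lemma matpow_Suc': "matpow A (Suc k) = matpow A k ** A"
  by (induction k) (simp_all add: matpow_def matrix_mul_assoc)

lemma matpow_transpose: "transpose (matpow A k) = matpow (transpose A) k"
proof (induction k)
  case 0 then show ?case by (simp add: matpow_def transpose_mat)
next
  case (Suc k)
  have "transpose (matpow A (Suc k)) = transpose A ** transpose (matpow A k)"
    by (simp only: matpow_Suc' matrix_transpose_mul)
  then show ?case using Suc by (simp only: matpow_Suc)
qed

lemma matpow_norm:
  assumes "\<forall>(a::real^'n^'n) (b::real^'n^'n). norm (a ** b) \<le> norm a * norm b * K" "K > 0"
  shows "norm (matpow (A::real^'n^'n) k) \<le> (K * norm A)^k * norm (mat 1 :: real^'n^'n)"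
proof (induction k)
  case 0 then show ?case by (simp add: matpow_def)
next
  case (Suc k)
  have "norm (matpow A (Suc k)) \<le> norm A * norm (matpow A k) * K"
    unfolding matpow_Suc by (rule spec[OF spec[OF assms(1)]])
  also have "\<dots> \<le> norm A * ((K * norm A)^k * norm (mat 1 :: real^'n^'n)) * K"
    using Suc assms(2) by (intro mult_right_mono mult_left_mono) auto
  finally show ?case by (simp add: algebra_simps)
qed

lemma mexp_summable: "summable (\<lambda>k. (1 / fact k) *\<^sub>R matpow (A::real^'n^'n) k)"
proof -
  obtain K where K: "K > 0" "\<forall>(a::real^'n^'n) (b::real^'n^'n). norm (a ** b) \<le> norm a * norm b * K"
    using matmul_bound by blast
  have "summable (\<lambda>k. norm (mat 1 :: real^'n^'n) * (inverse (fact k) * (K * norm A)^k))"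
    by (intro summable_mult summable_exp)
  then show ?thesis
  proof (rule summable_comparison_test'[where N=0])
    fix k :: nat
    have "norm ((1 / fact k) *\<^sub>R matpow A k) = inverse (fact k) * norm (matpow A k)"
      by (simp add: divide_inverse)
    also have "\<dots> \<le> inverse (fact k) * ((K * norm A)^k * norm (mat 1 :: real^'n^'n))"
      using matpow_norm[OF K(2) K(1)] by (intro mult_left_mono) auto
    finally show "norm ((1 / fact k) *\<^sub>R matpow A k) \<le> norm (mat 1 :: real^'n^'n) * (inverse (fact k) * (K * norm A)^k)"
      by (simp add: algebra_simps)
  qed
qed

lemma linear_transpose: "bounded_linear (transpose :: real^'n^'n \<Rightarrow> real^'n^'n)"
  unfolding linear_conv_bounded_linear[symmetric]
  by (rule linearI) (simp_all add: transpose_def vec_eq_iff)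

lemma transpose_scaleR: "transpose (c *\<^sub>R (M::real^'n^'n)) = c *\<^sub>R transpose M"
  by (simp add: transpose_def vec_eq_iff)

lemma mexp_transpose: "transpose (mexp A) = mexp (transpose (A::real^'n^'n))"
proof -
  have "transpose (mexp A) = (\<Sum>k. transpose ((1 / fact k) *\<^sub>R matpow A k))"
    unfolding mexp_def by (rule bounded_linear.suminf[OF linear_transpose mexp_summable])
  also have "\<dots> = mexp (transpose A)"
    unfolding mexp_def
    by (rule suminf_cong) (simp add: transpose_scaleR matpow_transpose)
  finally show ?thesis .
qed

lemma gramian_sym: "transpose (gramian A B T) = gramian A B (T::real)"
proof -
  let ?f = "(\<lambda>t. mexp ((T - t) *\<^sub>R A) ** B ** transpose B ** mexp ((T - t) *\<^sub>R transpose A))"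
  have ft: "transpose \<circ> ?f = ?f"
    by (rule ext) (simp add: matrix_transpose_mul mexp_transpose transpose_scaleR matrix_mul_assoc)
  show ?thesis
  proof (cases "?f integrable_on {0..T}")
    case True
    then show ?thesis unfolding gramian_def
      using integral_linear[OF True linear_transpose] ft by simp
  next
    case False
    then show ?thesis unfolding gramian_def not_integrable_integral[OF False]
      by (simp add: transpose_def vec_eq_iff)
  qed
qed

lemma sym_inner:
  assumes "transpose G = (G::real^'n^'n)"
  shows "x \<bullet> (G *v y) = y \<bullet> (G *v x)"
proof -
  have "x \<bullet> (G *v y) = (x v* G) \<bullet> y" by (simp add: dot_lmul_matrix)
  also have "x v* G = transpose G *v x" by simp
  finally show ?thesis using assms by (simp add: inner_commute)
qed

lemma quad_bounds:
  assumes sym: "transpose G = (G::real^'n^'n)" and Lm: "Lm > 0"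
    and q: "\<forall>x. Lm * (x \<bullet> x) \<le> x \<bullet> (G *v x) \<and> x \<bullet> (G *v x) \<le> Lp * (x \<bullet> x)"
  shows "Lm * norm y \<le> norm (G *v y)" "norm (G *v y) \<le> Lp * norm y"
proof -
  have "Lm * (norm y * norm y) \<le> y \<bullet> (G *v y)" using q by (simp add: dot_square_norm power2_eq_square)
  also have "\<dots> \<le> norm y * norm (G *v y)" by (rule norm_cauchy_schwarz)
  finally have *: "Lm * (norm y * norm y) \<le> norm y * norm (G *v y)" .
  show "Lm * norm y \<le> norm (G *v y)"
  proof (cases "y = 0")
    case True then show ?thesis by simp
  next
    case False
    then have "norm y > 0" by simp
    with * show ?thesis by (simp add: mult.assoc mult.left_commute[of Lm] mult_le_cancel_left_pos)
  qed
  show "norm (G *v y) \<le> Lp * norm y"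
  proof (cases "y = 0 \<or> G *v y = 0")
    case True then show ?thesis
    proof
      assume "y = 0" then show ?thesis by simp
    next
      assume "G *v y = 0"
      have "Lm * (y \<bullet> y) \<le> Lp * (y \<bullet> y)" using q by (meson order_trans)
      then have "Lm \<le> Lp \<or> y = 0" by (metis inner_gt_zero_iff mult_le_cancel_right_pos)
      then show ?thesis using \<open>G *v y = 0\<close> Lm by auto
    qed
  next
    case False
    define a where "a = norm (G *v y)"
    define s where "s = norm y"
    define c where "c = a / s"
    define u where "u = G *v y"
    define v where "v = c *\<^sub>R y"
    have a: "a > 0" and s: "s > 0" using False by (auto simp: a_def s_def)
    have c: "c > 0" using a s by (simp add: c_def)
    have e1: "(u+v) \<bullet> (G *v (u+v)) - (u-v) \<bullet> (G *v (u-v)) = 2*(u \<bullet> (G *v v)) + 2*(v \<bullet> (G *v u))"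
      by (simp add: matrix_vector_right_distrib matrix_vector_mult_diff_distrib inner_add inner_diff algebra_simps)
    also have "\<dots> = 4 * (u \<bullet> (G *v v))" using sym_inner[OF sym, of v u] by simp
    also have "\<dots> = 4 * c * a^2"
      by (simp add: u_def v_def a_def matrix_vector_mult_scaleR dot_square_norm)
    finally have e2: "4 * c * a^2 = (u+v) \<bullet> (G *v (u+v)) - (u-v) \<bullet> (G *v (u-v))" by simp
    have "(u-v) \<bullet> (G *v (u-v)) \<ge> 0"
      using q Lm by (meson inner_ge_zero mult_nonneg_nonneg less_imp_le order_trans)
    moreover have "(u+v) \<bullet> (G *v (u+v)) \<le> Lp * (norm (u+v))^2"
      using q by (simp add: dot_square_norm)
    moreover have "norm (u+v) \<le> 2 * a"
    proof -
      have "norm (u+v) \<le> norm u + norm v" by (rule norm_triangle_ineq)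
      also have "norm v = c * s" using c by (simp add: v_def s_def)
      also have "c * s = a" using s by (simp add: c_def)
      finally show ?thesis by (simp add: u_def a_def)
    qed
    ultimately have "4 * c * a^2 \<le> Lp * (2*a)^2"
    proof -
      assume h: "(u-v) \<bullet> (G *v (u-v)) \<ge> 0" "(u+v) \<bullet> (G *v (u+v)) \<le> Lp * (norm (u+v))^2" "norm (u+v) \<le> 2 * a"
      have "Lp \<ge> 0"
      proof -
        have "Lm * (y \<bullet> y) \<le> Lp * (y \<bullet> y)" using q by (meson order_trans)
        moreover have "y \<bullet> y > 0" using s by (simp add: s_def)
        ultimately show ?thesis using Lm by (smt (verit) mult_le_cancel_right_pos)
      qed
      then have "Lp * (norm (u+v))^2 \<le> Lp * (2*a)^2"
        using h(3) by (intro mult_left_mono power_mono) auto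
      then show ?thesis using e2 h by linarith
    qed
    then have "c \<le> Lp" using a by (simp add: power2_eq_square)
    then have "c * s \<le> Lp * s" using s by simp
    then show ?thesis using s by (simp add: c_def a_def s_def)
  qed
qed

lemma gram_solve:
  fixes G :: "real^'n^'n"
  assumes Lm: "Lm > 0" and q: "\<forall>x. Lm * (x \<bullet> x) \<le> x \<bullet> (G *v x)"
  shows "G *v (matrix_inv G *v r) = r"
proof -
  have "\<forall>x. G *v x = 0 \<longrightarrow> x = 0"
  proof (intro allI impI)
    fix x assume "G *v x = 0"
    then have "Lm * (x \<bullet> x) \<le> 0" using q by (metis inner_zero_right)
    then have "x \<bullet> x \<le> 0" using Lm by (simp add: mult_le_0_iff)
    then show "x = 0" using inner_ge_zero[of x] by (metis antisym inner_eq_zero_iff)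
  qed
  then have "invertible G"
    using matrix_left_invertible_ker invertible_left_inverse by blast
  then have "G ** matrix_inv G = mat 1 \<and> matrix_inv G ** G = mat 1"
    unfolding invertible_def matrix_inv_def by (rule someI_ex)
  then show ?thesis by (simp add: matrix_vector_mul_assoc)
qed

lemma infdist_bounds:
  fixes G :: "real^'n^'n"
  assumes "V \<noteq> {}" "Lm > 0" "Lp > 0"
    and qb: "\<And>z. Lm * norm z \<le> norm (G *v z)" "\<And>z. norm (G *v z) \<le> Lp * norm z"
  shows "Lm * infdist x V \<le> infdist (G *v x) ((\<lambda>\<psi>. G *v \<psi>) ` V)"
    "infdist (G *v x) ((\<lambda>\<psi>. G *v \<psi>) ` V) \<le> Lp * infdist x V"
proof -
  have ne: "(\<lambda>\<psi>. G *v \<psi>) ` V \<noteq> {}" using assms(1) by simp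
  have "infdist x V \<le> infdist (G *v x) ((\<lambda>\<psi>. G *v \<psi>) ` V) / Lm"
  proof -
    have "infdist (G *v x) ((\<lambda>\<psi>. G *v \<psi>) ` V) = (INF v\<in>V. dist (G *v x) (G *v v))"
      unfolding infdist_notempty[OF ne] image_image ..
    also have "\<dots> \<ge> Lm * infdist x V"
    proof (rule cINF_greatest[OF assms(1)])
      fix v assume "v \<in> V"
      have "Lm * infdist x V \<le> Lm * dist x v"
        using \<open>v \<in> V\<close> assms(2) by (simp add: infdist_le)
      also have "\<dots> \<le> norm (G *v (x - v))" using qb(1) by (simp add: dist_norm)
      finally show "Lm * infdist x V \<le> dist (G *v x) (G *v v)"
        by (simp add: dist_norm matrix_vector_mult_diff_distrib)
    qed
    finally show ?thesis using assms(2) by (simp add: field_simps)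
  qed
  then show "Lm * infdist x V \<le> infdist (G *v x) ((\<lambda>\<psi>. G *v \<psi>) ` V)"
    using assms(2) by (simp add: field_simps)
  have "infdist (G *v x) ((\<lambda>\<psi>. G *v \<psi>) ` V) / Lp \<le> infdist x V"
    unfolding infdist_notempty[OF assms(1)]
  proof (rule cINF_greatest[OF assms(1)])
    fix v assume "v \<in> V"
    have "infdist (G *v x) ((\<lambda>\<psi>. G *v \<psi>) ` V) \<le> dist (G *v x) (G *v v)"
      using \<open>v \<in> V\<close> by (simp add: infdist_le)
    also have "\<dots> = norm (G *v (x - v))" by (simp add: dist_norm matrix_vector_mult_diff_distrib)
    also have "\<dots> \<le> Lp * dist x v" using qb(2) by (simp add: dist_norm)
    finally show "infdist (G *v x) ((\<lambda>\<psi>. G *v \<psi>) ` V) / Lp \<le> dist x v"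
      using assms(3) by (simp add: field_simps)
  qed
  then show "infdist (G *v x) ((\<lambda>\<psi>. G *v \<psi>) ` V) \<le> Lp * infdist x V"
    using assms(3) by (simp add: field_simps)
qed

lemma greedy_bound:
  fixes e g :: "'a::metric_space \<Rightarrow> real"
  assumes "finite Nt" "Nt \<subseteq> NN" "Nt \<noteq> {}" "\<forall>\<mu>\<in>NN. infdist \<mu> Nt < \<delta>" "Lm > 0"
    "\<forall>\<mu>\<in>NN. Lm * e \<mu> \<le> g \<mu>" "\<forall>\<mu>\<in>NN. \<forall>\<mu>'\<in>NN. e \<mu> \<le> e \<mu>' + C * dist \<mu> \<mu>'"
    "C \<ge> 0" "2 * C * Lm * \<delta> \<le> \<epsilon>"
  shows "(SUP \<mu>\<in>NN. e \<mu>) \<le> Max (g ` Nt) / Lm + \<epsilon> / (2 * Lm)"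
proof (rule cSUP_least)
  show "NN \<noteq> {}" using assms(2,3) by blast
  fix \<mu> assume \<mu>: "\<mu> \<in> NN"
  have "\<exists>a\<in>Nt. dist \<mu> a < \<delta>"
  proof (rule ccontr)
    assume "\<not> ?thesis"
    then have "\<delta> \<le> infdist \<mu> Nt"
      unfolding infdist_notempty[OF assms(3)] by (intro cINF_greatest[OF assms(3)]) auto
    then show False using assms(4) \<mu> by force
  qed
  then obtain a where a: "a \<in> Nt" "dist \<mu> a < \<delta>" by blast
  have aN: "a \<in> NN" using a assms(2) by blast
  have "e \<mu> \<le> e a + C * dist \<mu> a" using assms(7) \<mu> aN by blast
  also have "C * dist \<mu> a \<le> C * \<delta>" using a assms(8) by (intro mult_left_mono) auto
  also have "C * \<delta> \<le> \<epsilon> / (2 * Lm)" using assms(9,5) by (simp add: field_simps)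
  also have "e a \<le> Max (g ` Nt) / Lm"
  proof -
    have "g a \<le> Max (g ` Nt)" using a assms(1) by simp
    then have "Lm * e a \<le> Max (g ` Nt)" using assms(6) aN by force
    then show ?thesis using assms(5) by (simp add: field_simps)
  qed
  finally show "e \<mu> \<le> Max (g ` Nt) / Lm + \<epsilon> / (2 * Lm)" by simp
qed

lemma weak_step:
  fixes S M Lm Lp e \<epsilon> :: real
  assumes "S \<le> M / Lm + \<epsilon> / (2 * Lm)" "M \<ge> \<epsilon> / 2" "M \<le> Lp * e" "Lm > 0" "Lp > 0"
  shows "Lm / (2 * Lp) * S \<le> e"
proof -
  have "\<epsilon> / (2 * Lm) = (\<epsilon> / 2) / Lm" by simp
  also have "\<dots> \<le> M / Lm" using assms(2,4) by (intro divide_right_mono) auto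
  finally have "S \<le> M / Lm + M / Lm" using assms(1) by simp
  then have "S \<le> 2 * M / Lm" by simp
  also have "\<dots> \<le> 2 * (Lp * e) / Lm" using assms(3,4) by (simp add: divide_right_mono)
  finally have "S \<le> 2 * (Lp * e) / Lm" .
  then have "Lm / (2 * Lp) * S \<le> Lm / (2 * Lp) * (2 * (Lp * e) / Lm)"
    using assms(4,5) by (intro mult_left_mono) auto
  also have "\<dots> = e" using assms(4,5) by (simp add: field_simps)
  finally show ?thesis .
qed

theorem theorem2:
  fixes NN :: "(real^'d) set"
    and A :: "real^'d \<Rightarrow> real^'n^'n"
    and B :: "real^'d \<Rightarrow> real^'m^'n"
    and T :: real and x0 x1 :: "real^'n"
    and Lm Lp C \<epsilon> \<delta> :: real
    and Nt :: "(real^'d) set"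
    and n :: nat and \<nu> :: "nat \<Rightarrow> real^'d"
  assumes "compact NN"
    and "T > 0"
    and "\<exists>LA. LA-lipschitz_on NN A"
    and "\<exists>LB. LB-lipschitz_on NN B"
    and "0 < Lm" and "Lm \<le> Lp"
    and "\<forall>\<mu>\<in>NN. \<forall>x. Lm * (x \<bullet> x) \<le> x \<bullet> (gramian (A \<mu>) (B \<mu>) T *v x)
                     \<and> x \<bullet> (gramian (A \<mu>) (B \<mu>) T *v x) \<le> Lp * (x \<bullet> x)"
    and "C-lipschitz_on NN (phi0 A B T x0 x1)"
    and "\<epsilon> > 0" and "\<delta> > 0" and "2 * C * Lm * \<delta> \<le> \<epsilon>"
    \<comment> \<open>Step 1\<close>
    and "finite Nt" and "Nt \<subseteq> NN"
    and "\<forall>\<mu>\<in>NN. infdist \<mu> Nt < \<delta>"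
    \<comment> \<open>Step 2 (no stop, nu_1 a maximiser)\<close>
    and "n \<ge> 1"
    and "\<nu> 1 \<in> Nt"
    and "norm (x1 - mexp (T *\<^sub>R A (\<nu> 1)) *v x0)
           = Max ((\<lambda>\<mu>. norm (x1 - mexp (T *\<^sub>R A \<mu>) *v x0)) ` Nt)"
    and "Max ((\<lambda>\<mu>. norm (x1 - mexp (T *\<^sub>R A \<mu>) *v x0)) ` Nt) \<ge> \<epsilon> / 2"
    \<comment> \<open>Step 3 for j = 1..n-1 (no stop, nu_(j+1) a maximiser)\<close>
    and "\<forall>j\<in>{1..<n}. \<nu> (j+1) \<in> Nt
           \<and> infdist (x1 - mexp (T *\<^sub>R A (\<nu> (j+1))) *v x0)
                 ((\<lambda>\<psi>. gramian (A (\<nu> (j+1))) (B (\<nu> (j+1))) T *v \<psi>)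
                    ` span (phi0 A B T x0 x1 ` \<nu> ` {1..j}))
             = Max ((\<lambda>\<mu>. infdist (x1 - mexp (T *\<^sub>R A \<mu>) *v x0)
                 ((\<lambda>\<psi>. gramian (A \<mu>) (B \<mu>) T *v \<psi>)
                    ` span (phi0 A B T x0 x1 ` \<nu> ` {1..j}))) ` Nt)
           \<and> Max ((\<lambda>\<mu>. infdist (x1 - mexp (T *\<^sub>R A \<mu>) *v x0)
                 ((\<lambda>\<psi>. gramian (A \<mu>) (B \<mu>) T *v \<psi>)
                    ` span (phi0 A B T x0 x1 ` \<nu> ` {1..j}))) ` Nt) \<ge> \<epsilon> / 2"
    \<comment> \<open>Step 3 at j = n: stop\<close>
    and "Max ((\<lambda>\<mu>. infdist (x1 - mexp (T *\<^sub>R A \<mu>) *v x0)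
                 ((\<lambda>\<psi>. gramian (A \<mu>) (B \<mu>) T *v \<psi>)
                    ` span (phi0 A B T x0 x1 ` \<nu> ` {1..n}))) ` Nt) < \<epsilon> / 2"
  shows "Lm / (2 * Lp) \<le> 1 / 2
    \<and> norm (phi0 A B T x0 x1 (\<nu> 1))
        \<ge> (Lm / (2 * Lp)) * (SUP \<mu>\<in>NN. norm (phi0 A B T x0 x1 \<mu>))
    \<and> (\<forall>j\<in>{1..<n}.
          infdist (phi0 A B T x0 x1 (\<nu> (j+1))) (span (phi0 A B T x0 x1 ` \<nu> ` {1..j}))
        \<ge> (Lm / (2 * Lp)) *
           (SUP \<mu>\<in>NN. infdist (phi0 A B T x0 x1 \<mu>) (span (phi0 A B T x0 x1 ` \<nu> ` {1..j}))))
    \<and> (SUP \<mu>\<in>NN. infdist (phi0 A B T x0 x1 \<mu>) (span (phi0 A B T x0 x1 ` \<nu> ` {1..n})))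
        < \<epsilon> / Lm"
proof -
  let ?G = "\<lambda>\<mu>. gramian (A \<mu>) (B \<mu>) T"
  let ?r = "\<lambda>\<mu>. x1 - mexp (T *\<^sub>R A \<mu>) *v x0"
  let ?p = "phi0 A B T x0 x1"
  have C0: "C \<ge> 0" and Lip: "\<forall>\<mu>\<in>NN. \<forall>\<mu>'\<in>NN. dist (?p \<mu>) (?p \<mu>') \<le> C * dist \<mu> \<mu>'"
    using assms(8) unfolding lipschitz_on_def by auto
  have Lm: "Lm > 0" using assms(5) .
  have Lp: "Lp > 0" using assms(5,6) by linarith
  have Ntne: "Nt \<noteq> {}" using assms(16) by blast
  have solve: "?G \<mu> *v ?p \<mu> = ?r \<mu>" if "\<mu> \<in> NN" for \<mu>
    unfolding phi0_def by (rule gram_solve[OF Lm]) (use assms(7) that in blast)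
  have qb1: "Lm * norm z \<le> norm (?G \<mu> *v z)" and qb2: "norm (?G \<mu> *v z) \<le> Lp * norm z"
    if "\<mu> \<in> NN" for \<mu> z
    using quad_bounds[OF gramian_sym Lm, of "A \<mu>" "B \<mu>" T Lp z] assms(7) that by auto
  have idb1: "Lm * infdist (?p \<mu>) V \<le> infdist (?r \<mu>) ((\<lambda>\<psi>. ?G \<mu> *v \<psi>) ` V)"
    and idb2: "infdist (?r \<mu>) ((\<lambda>\<psi>. ?G \<mu> *v \<psi>) ` V) \<le> Lp * infdist (?p \<mu>) V"
    if "\<mu> \<in> NN" "V \<noteq> {}" for \<mu> V
    using infdist_bounds[OF that(2) Lm Lp, of "?G \<mu>" "?p \<mu>"] qb1[OF that(1)] qb2[OF that(1)] solve[OF that(1)]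
    by auto
  have spne: "span X \<noteq> {}" for X :: "(real^'n) set" using span_zero by blast
  have P2: "norm (?p (\<nu> 1)) \<ge> (Lm / (2 * Lp)) * (SUP \<mu>\<in>NN. norm (?p \<mu>))"
  proof -
    have "(SUP \<mu>\<in>NN. norm (?p \<mu>)) \<le> Max ((\<lambda>\<mu>. norm (?r \<mu>)) ` Nt) / Lm + \<epsilon> / (2 * Lm)"
    proof (rule greedy_bound[OF assms(12,13) Ntne assms(14) Lm _ _ C0 assms(11)])
      show "\<forall>\<mu>\<in>NN. Lm * norm (?p \<mu>) \<le> norm (?r \<mu>)" using qb1 solve by metis
      show "\<forall>\<mu>\<in>NN. \<forall>\<mu>'\<in>NN. norm (?p \<mu>) \<le> norm (?p \<mu>') + C * dist \<mu> \<mu>'"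
      proof (intro ballI)
        fix \<mu> \<mu>' assume "\<mu> \<in> NN" "\<mu>' \<in> NN"
        have "norm (?p \<mu>) \<le> norm (?p \<mu>') + norm (?p \<mu> - ?p \<mu>')" by (rule norm_triangle_sub)
        then show "norm (?p \<mu>) \<le> norm (?p \<mu>') + C * dist \<mu> \<mu>'"
          using Lip \<open>\<mu> \<in> NN\<close> \<open>\<mu>' \<in> NN\<close> by (smt (verit) dist_norm)
      qed
    qed
    moreover have "Max ((\<lambda>\<mu>. norm (?r \<mu>)) ` Nt) \<le> Lp * norm (?p (\<nu> 1))"
      using assms(17) qb2 solve assms(13,16) by (metis subsetD)
    ultimately show ?thesis using weak_step assms(18) Lm Lp by blast
  qed
  have P3: "infdist (?p (\<nu> (j+1))) (span (?p ` \<nu> ` {1..j}))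
        \<ge> (Lm / (2 * Lp)) * (SUP \<mu>\<in>NN. infdist (?p \<mu>) (span (?p ` \<nu> ` {1..j})))"
    if j: "j \<in> {1..<n}" for j
  proof -
    define V where "V = span (?p ` \<nu> ` {1..j})"
    have Vne: "V \<noteq> {}" unfolding V_def by (rule spne)
    have h: "\<nu> (j+1) \<in> Nt"
       "infdist (?r (\<nu> (j+1))) ((\<lambda>\<psi>. ?G (\<nu> (j+1)) *v \<psi>) ` V)
          = Max ((\<lambda>\<mu>. infdist (?r \<mu>) ((\<lambda>\<psi>. ?G \<mu> *v \<psi>) ` V)) ` Nt)"
       "Max ((\<lambda>\<mu>. infdist (?r \<mu>) ((\<lambda>\<psi>. ?G \<mu> *v \<psi>) ` V)) ` Nt) \<ge> \<epsilon> / 2"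
      using assms(19) j unfolding V_def by auto
    have "(SUP \<mu>\<in>NN. infdist (?p \<mu>) V) \<le> Max ((\<lambda>\<mu>. infdist (?r \<mu>) ((\<lambda>\<psi>. ?G \<mu> *v \<psi>) ` V)) ` Nt) / Lm + \<epsilon> / (2 * Lm)"
    proof (rule greedy_bound[OF assms(12,13) Ntne assms(14) Lm _ _ C0 assms(11)])
      show "\<forall>\<mu>\<in>NN. Lm * infdist (?p \<mu>) V \<le> infdist (?r \<mu>) ((\<lambda>\<psi>. ?G \<mu> *v \<psi>) ` V)"
        using idb1 Vne by blast
      show "\<forall>\<mu>\<in>NN. \<forall>\<mu>'\<in>NN. infdist (?p \<mu>) V \<le> infdist (?p \<mu>') V + C * dist \<mu> \<mu>'"
      proof (intro ballI)
        fix \<mu> \<mu>' assume "\<mu> \<in> NN" "\<mu>' \<in> NN"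
        have "infdist (?p \<mu>) V \<le> infdist (?p \<mu>') V + dist (?p \<mu>) (?p \<mu>')" by (rule infdist_triangle)
        then show "infdist (?p \<mu>) V \<le> infdist (?p \<mu>') V + C * dist \<mu> \<mu>'"
          using Lip \<open>\<mu> \<in> NN\<close> \<open>\<mu>' \<in> NN\<close> by (smt (verit))
      qed
    qed
    moreover have "Max ((\<lambda>\<mu>. infdist (?r \<mu>) ((\<lambda>\<psi>. ?G \<mu> *v \<psi>) ` V)) ` Nt) \<le> Lp * infdist (?p (\<nu> (j+1))) V"
      using h(1,2) idb2[OF _ Vne] assms(13) by (metis subsetD)
    ultimately show ?thesis using weak_step h(3) Lm Lp unfolding V_def by blast
  qed
  have P4: "(SUP \<mu>\<in>NN. infdist (?p \<mu>) (span (?p ` \<nu> ` {1..n}))) < \<epsilon> / Lm"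
  proof -
    define V where "V = span (?p ` \<nu> ` {1..n})"
    have Vne: "V \<noteq> {}" unfolding V_def by (rule spne)
    have h: "Max ((\<lambda>\<mu>. infdist (?r \<mu>) ((\<lambda>\<psi>. ?G \<mu> *v \<psi>) ` V)) ` Nt) < \<epsilon> / 2"
      using assms(20) unfolding V_def by auto
    have "(SUP \<mu>\<in>NN. infdist (?p \<mu>) V) \<le> Max ((\<lambda>\<mu>. infdist (?r \<mu>) ((\<lambda>\<psi>. ?G \<mu> *v \<psi>) ` V)) ` Nt) / Lm + \<epsilon> / (2 * Lm)"
    proof (rule greedy_bound[OF assms(12,13) Ntne assms(14) Lm _ _ C0 assms(11)])
      show "\<forall>\<mu>\<in>NN. Lm * infdist (?p \<mu>) V \<le> infdist (?r \<mu>) ((\<lambda>\<psi>. ?G \<mu> *v \<psi>) ` V)"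
        using idb1 Vne by blast
      show "\<forall>\<mu>\<in>NN. \<forall>\<mu>'\<in>NN. infdist (?p \<mu>) V \<le> infdist (?p \<mu>') V + C * dist \<mu> \<mu>'"
      proof (intro ballI)
        fix \<mu> \<mu>' assume "\<mu> \<in> NN" "\<mu>' \<in> NN"
        have "infdist (?p \<mu>) V \<le> infdist (?p \<mu>') V + dist (?p \<mu>) (?p \<mu>')" by (rule infdist_triangle)
        then show "infdist (?p \<mu>) V \<le> infdist (?p \<mu>') V + C * dist \<mu> \<mu>'"
          using Lip \<open>\<mu> \<in> NN\<close> \<open>\<mu>' \<in> NN\<close> by (smt (verit))
      qed
    qed
    also have "\<dots> < (\<epsilon> / 2) / Lm + \<epsilon> / (2 * Lm)"
      using divide_strict_right_mono[OF h Lm] by linarith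
    also have "\<dots> = \<epsilon> / Lm" by (simp add: field_simps)
    finally show ?thesis unfolding V_def .
  qed
  have P1: "Lm / (2 * Lp) \<le> 1 / 2" using Lm assms(6) by (simp add: field_simps)
  show ?thesis using P1 P2 P3 P4 by blast
qed

end
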